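(* Let $S_1,S_2$ be strips and let $h:\partial S_1\to\partial S_2$ be a homeomorphism which is monotone (i.e. either preserves or reverses the partial order on the boundaries described in the context). Then $h$ extends to a foliated homeomorphism $\hat h:S_1\to S_2$ (with respect to the canonical foliations), i.e. $\hat h|_{\partial S_1}=h$.
   Context: A subset $S\subset\mathbb{R}^2$ is a strip if for some real numbers $u<v$ one has $\mathbb{R}\times(u,v)\subset S\subset\mathbb{R}\times[u,v]$ and $S$ is open in $\mathbb{R}\times[u,v]$. Put $\partial_-S=S\cap(\mathbb{R}\times\{u\})$, $\partial_+S=S\cap(\mathbb{R}\times\{v\})$, $\partial S=\partial_-S\cup\partial_+S$ (a disjoint union of open horizontal intervals, the boundary intervals). The canonical foliation of $S$ consists of the lines $\mathbb{R}\times\{t\}$, $t\in(u,v)$, and the boundary intervals. Partial order on $\partial S$: for $(a,x),(b,y)\in\partial S$, $(a,x)<(b,y)$ iff $a<b$ and $x=y$ (so $\partial_-S$ and $\partial_+S$ are each linearly ordered and mutually incomparable). For strips $S_1,S_2$, subsets $A\subset\partial S_1$, $B\subset\partial S_2$, a bijection $h:A\to B$ preserves order if for all $a,a'\in A$: $a<a'\iff h(a)<h(a')$; it reverses order if $a<a'\iff h(a)>h(a')$; it is monotone if it preserves or reverses order. A foliated homeomorphism maps leaves onto leaves. *)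

theory Defs
  imports "HOL-Analysis.Analysis"
begin

definition is_strip :: "(real \<times> real) set \<Rightarrow> bool" where
  "is_strip S \<longleftrightarrow> (\<exists>u v. u < v \<and> UNIV \<times> {u<..<v} \<subseteq> S \<and> S \<subseteq> UNIV \<times> {u..v}
      \<and> openin (top_of_set (UNIV \<times> {u..v})) S)"

text \<open>For a strip, the numbers u and v are determined by S.\<close>
definition strip_lo :: "(real \<times> real) set \<Rightarrow> real" where
  "strip_lo S = Inf (snd ` S)"

definition strip_hi :: "(real \<times> real) set \<Rightarrow> real" where
  "strip_hi S = Sup (snd ` S)"

definition bd_minus :: "(real \<times> real) set \<Rightarrow> (real \<times> real) set" where
  "bd_minus S = S \<inter> (UNIV \<times> {strip_lo S})"

definition bd_plus :: "(real \<times> real) set \<Rightarrow> (real \<times> real) set" where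
  "bd_plus S = S \<inter> (UNIV \<times> {strip_hi S})"

definition strip_bd :: "(real \<times> real) set \<Rightarrow> (real \<times> real) set" where
  "strip_bd S = bd_minus S \<union> bd_plus S"

definition canonical_leaves :: "(real \<times> real) set \<Rightarrow> (real \<times> real) set set" where
  "canonical_leaves S =
     {UNIV \<times> {t} | t. strip_lo S < t \<and> t < strip_hi S} \<union> components (strip_bd S)"

definition bd_less :: "real \<times> real \<Rightarrow> real \<times> real \<Rightarrow> bool" where
  "bd_less p q \<longleftrightarrow> fst p < fst q \<and> snd p = snd q"

definition preserves_order :: "(real \<times> real) set \<Rightarrow> (real \<times> real \<Rightarrow> real \<times> real) \<Rightarrow> bool" where
  "preserves_order A h \<longleftrightarrow> (\<forall>a\<in>A. \<forall>a'\<in>A. bd_less a a' \<longleftrightarrow> bd_less (h a) (h a'))"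

definition reverses_order :: "(real \<times> real) set \<Rightarrow> (real \<times> real \<Rightarrow> real \<times> real) \<Rightarrow> bool" where
  "reverses_order A h \<longleftrightarrow> (\<forall>a\<in>A. \<forall>a'\<in>A. bd_less a a' \<longleftrightarrow> bd_less (h a') (h a))"

definition monotone_bd :: "(real \<times> real) set \<Rightarrow> (real \<times> real \<Rightarrow> real \<times> real) \<Rightarrow> bool" where
  "monotone_bd A h \<longleftrightarrow> preserves_order A h \<or> reverses_order A h"

definition foliated :: "(real \<times> real) set \<Rightarrow> (real \<times> real) set \<Rightarrow> (real \<times> real \<Rightarrow> real \<times> real) \<Rightarrow> bool" where
  "foliated S1 S2 f \<longleftrightarrow> (\<forall>L\<in>canonical_leaves S1. f ` L \<in> canonical_leaves S2)"

end

theory Submission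
  imports Defs
begin


definition XF :: "real set \<Rightarrow> (real \<Rightarrow> real) \<Rightarrow> real \<Rightarrow> real" where
  "XF U \<alpha> p = (if U = {} then p/2 else (SUP z\<in>U. min z (p - \<alpha> z)))"

definition incr_on :: "real set \<Rightarrow> (real \<Rightarrow> real) \<Rightarrow> bool" where
  "incr_on U \<alpha> \<longleftrightarrow> (\<forall>z\<in>U. \<forall>w\<in>U. z < w \<longrightarrow> \<alpha> z < \<alpha> w)"

lemma XF_elem_le:
  assumes "incr_on U \<alpha>" "z \<in> U" "w \<in> U"
  shows "min w (p - \<alpha> w) \<le> max z (p - \<alpha> z)"
proof (cases "w \<le> z")
  case True thus ?thesis by linarith
next
  case False
  then have "\<alpha> z < \<alpha> w" using assms unfolding incr_on_def by auto
  thus ?thesis by linarith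
qed

lemma XF_bdd:
  assumes "incr_on U \<alpha>" "z \<in> U"
  shows "bdd_above ((\<lambda>w. min w (p - \<alpha> w)) ` U)"
  using XF_elem_le[OF assms] by (auto intro!: bdd_aboveI2)

lemma XF_ge:
  assumes "incr_on U \<alpha>" "z \<in> U"
  shows "min z (p - \<alpha> z) \<le> XF U \<alpha> p"
  using assms XF_bdd[OF assms] unfolding XF_def by (auto intro: cSUP_upper)

lemma XF_le:
  assumes "incr_on U \<alpha>" "z \<in> U"
  shows "XF U \<alpha> p \<le> max z (p - \<alpha> z)"
  using assms XF_elem_le[OF assms(1) assms(2)] unfolding XF_def by (auto intro!: cSUP_least)

lemma XF_mono:
  assumes "incr_on U \<alpha>" "p \<le> q"
  shows "XF U \<alpha> p \<le> XF U \<alpha> q"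
proof (cases "U = {}")
  case True thus ?thesis using assms by (simp add: XF_def)
next
  case False
  then obtain z where z: "z \<in> U" by auto
  show ?thesis using False unfolding XF_def
    apply simp
    apply (rule cSUP_mono)
    using False XF_bdd[OF assms(1) z] apply auto[2]
    subgoal for n apply (rule bexI[of _ n]) using assms(2) by auto
    done
qed

lemma XF_mono2:
  assumes "incr_on U \<alpha>" "p \<le> q"
  shows "XF U \<alpha> q \<le> XF U \<alpha> p + (q - p)"
proof (cases "U = {}")
  case True thus ?thesis using assms by (simp add: XF_def)
next
  case False
  then obtain z where z: "z \<in> U" by auto
  have "XF U \<alpha> q \<le> XF U \<alpha> p + (q - p)"
    unfolding XF_def[of U \<alpha> q] using False
  proof (simp, intro cSUP_least)
    fix w assume w: "w \<in> U"
    have "min w (p - \<alpha> w) \<le> XF U \<alpha> p" by (rule XF_ge[OF assms(1) w])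
    thus "min w (q - \<alpha> w) \<le> XF U \<alpha> p + (q - p)" using assms(2) by linarith
  qed (use False in auto)
  thus ?thesis .
qed

lemma XF_at:
  assumes "incr_on U \<alpha>" "a \<in> U"
  shows "XF U \<alpha> (a + \<alpha> a) = a"
  using XF_ge[OF assms, of "a + \<alpha> a"] XF_le[OF assms, of "a + \<alpha> a"] by simp

lemma XF_uniq_x:
  assumes inc: "incr_on U \<alpha>" and a: "a \<in> U" and U: "open U" and cont: "continuous_on U \<alpha>"
    and X: "XF U \<alpha> p = a"
  shows "p = a + \<alpha> a"
proof -
  obtain \<delta> where d: "\<delta> > 0" "ball a \<delta> \<subseteq> U" using U a open_contains_ball by blast
  have up: "p \<le> a + \<alpha> z" if "z \<in> U" "z > a" for z
    using XF_ge[OF inc that(1), of p] X that(2) by linarith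
  have lo: "p \<ge> a + \<alpha> z" if "z \<in> U" "z < a" for z
    using XF_le[OF inc that(1), of p] X that(2) by linarith
  show ?thesis
  proof (rule ccontr)
    assume ne: "p \<noteq> a + \<alpha> a"
    define e where "e = \<bar>p - (a + \<alpha> a)\<bar>"
    have e: "e > 0" using ne e_def by auto
    obtain d where dd: "d > 0" "\<forall>z\<in>U. dist z a < d \<longrightarrow> dist (\<alpha> z) (\<alpha> a) < e"
      using cont a e unfolding continuous_on_iff by blast
    define r where "r = min d \<delta> / 2"
    have r: "r > 0" "r < d" "r < \<delta>" using dd d by (auto simp: r_def)
    have z1: "a + r \<in> U" "a - r \<in> U" using d r by (auto simp: dist_real_def subset_iff)
    have c1: "\<bar>\<alpha> (a + r) - \<alpha> a\<bar> < e" using dd z1 r by (auto simp: dist_real_def)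
    have c2: "\<bar>\<alpha> (a - r) - \<alpha> a\<bar> < e" using dd z1 r by (auto simp: dist_real_def)
    have "p \<le> a + \<alpha> (a + r)" using up z1 r by auto
    moreover have "p \<ge> a + \<alpha> (a - r)" using lo z1 r by auto
    ultimately show False using c1 c2 e_def by linarith
  qed
qed

lemma XF_uniq_y:
  assumes inc: "incr_on U \<alpha>" and a: "a \<in> U" and U: "open U"
    and Y: "p - XF U \<alpha> p = \<alpha> a"
  shows "p = a + \<alpha> a"
proof -
  obtain \<delta> where d: "\<delta> > 0" "ball a \<delta> \<subseteq> U" using U a open_contains_ball by blast
  have lo: "p \<ge> z + \<alpha> a" if "z \<in> U" "z < a" for z
  proof -
    have "\<alpha> z < \<alpha> a" using inc that a unfolding incr_on_def by auto
    thus ?thesis using XF_ge[OF inc that(1), of p] Y by linarith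
  qed
  have up: "p \<le> z + \<alpha> a" if "z \<in> U" "z > a" for z
  proof -
    have "\<alpha> z > \<alpha> a" using inc that a unfolding incr_on_def by auto
    thus ?thesis using XF_le[OF inc that(1), of p] Y by linarith
  qed
  show ?thesis
  proof (rule ccontr)
    assume ne: "p \<noteq> a + \<alpha> a"
    define r where "r = min (\<bar>p - (a + \<alpha> a)\<bar>) \<delta> / 2"
    have r: "r > 0" "r < \<bar>p - (a + \<alpha> a)\<bar>" "r < \<delta>" using ne d unfolding r_def min_def by auto
    have z1: "a + r \<in> U" "a - r \<in> U" using d r by (auto simp: dist_real_def subset_iff)
    show False using up[OF z1(1)] lo[OF z1(2)] r by linarith
  qed
qed



definition okX :: "(real \<Rightarrow> real) \<Rightarrow> bool" where
  "okX A \<longleftrightarrow> (\<forall>p q. p \<le> q \<longrightarrow> A p \<le> A q \<and> A q \<le> A p + (q - p))"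

lemma okX_XF: "incr_on U \<alpha> \<Longrightarrow> okX (XF U \<alpha>)"
  unfolding okX_def using XF_mono XF_mono2 by blast

lemma okX_lip: "okX A \<Longrightarrow> \<bar>A q - A p\<bar> \<le> \<bar>q - p\<bar>"
  unfolding okX_def by (cases "p \<le> q") (fastforce, smt (verit))

lemma okX_cont: "okX A \<Longrightarrow> continuous_on UNIV A"
  unfolding continuous_on_iff
  by (metis dist_real_def le_less_trans okX_lip)

definition xxF :: "(real \<Rightarrow> real) \<Rightarrow> (real \<Rightarrow> real) \<Rightarrow> real \<Rightarrow> real \<Rightarrow> real" where
  "xxF A B p s = (1 - s)^2 * A p + s^2 * B p + s * (1 - s) * p"

definition yyF :: "(real \<Rightarrow> real) \<Rightarrow> (real \<Rightarrow> real) \<Rightarrow> real \<Rightarrow> real \<Rightarrow> real" where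
  "yyF A B p s = p - xxF A B p s"

lemma xx_diff:
  assumes "okX A" "okX B" "0 \<le> s" "s \<le> 1" "p \<le> q"
  shows "xxF A B q s - xxF A B p s \<ge> s * (1 - s) * (q - p)"
proof -
  have "A p \<le> A q" "B p \<le> B q" using assms unfolding okX_def by auto
  then have "0 \<le> (1 - s)^2 * (A q - A p)" "0 \<le> s^2 * (B q - B p)" by auto
  thus ?thesis unfolding xxF_def by (simp add: algebra_simps)
qed

lemma yy_diff:
  assumes "okX A" "okX B" "0 \<le> s" "s \<le> 1" "p \<le> q"
  shows "yyF A B q s - yyF A B p s \<ge> s * (1 - s) * (q - p)"
proof -
  have "A q - A p \<le> q - p" "B q - B p \<le> q - p" using assms unfolding okX_def by (auto simp: algebra_simps)
  then have 1: "(1 - s)^2 * (A q - A p) \<le> (1 - s)^2 * (q - p)" "s^2 * (B q - B p) \<le> s^2 * (q - p)"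
    by (auto intro: mult_left_mono)
  have 2: "q - p = ((1 - s)^2 + s^2 + 2 * s * (1 - s)) * (q - p)" by (simp add: algebra_simps power2_eq_square)
  have "yyF A B q s - yyF A B p s = (q - p) - ((1 - s)^2 * (A q - A p) + s^2 * (B q - B p) + s * (1 - s) * (q - p))"
    unfolding yyF_def xxF_def by (simp add: algebra_simps)
  also have "\<dots> \<ge> (q - p) - ((1 - s)^2 * (q - p) + s^2 * (q - p) + s * (1 - s) * (q - p))"
    using 1 by linarith
  also have "(q - p) - ((1 - s)^2 * (q - p) + s^2 * (q - p) + s * (1 - s) * (q - p)) = s * (1 - s) * (q - p)"
    by (subst (1) 2) (simp add: algebra_simps)
  finally show ?thesis .
qed

lemma xx_mono:
  assumes "okX A" "okX B" "0 \<le> s" "s \<le> 1" "p \<le> q"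
  shows "xxF A B p s \<le> xxF A B q s"
  using xx_diff[OF assms] assms(3,4,5) by (smt (verit) mult_nonneg_nonneg)

lemma yy_mono:
  assumes "okX A" "okX B" "0 \<le> s" "s \<le> 1" "p \<le> q"
  shows "yyF A B p s \<le> yyF A B q s"
  using yy_diff[OF assms] assms(3,4,5) by (smt (verit) mult_nonneg_nonneg)

lemma xx_cont:
  assumes "okX A" "okX B"
  shows "continuous_on UNIV (\<lambda>z. xxF A B (fst z) (snd z))"
proof -
  have a: "continuous_on UNIV (\<lambda>z::real\<times>real. A (fst z))"
    by (rule continuous_on_compose2[OF okX_cont[OF assms(1)]]) (auto intro: continuous_intros)
  have b: "continuous_on UNIV (\<lambda>z::real\<times>real. B (fst z))"
    by (rule continuous_on_compose2[OF okX_cont[OF assms(2)]]) (auto intro: continuous_intros)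
  show ?thesis unfolding xxF_def by (intro continuous_intros a b)
qed

lemma yy_cont:
  assumes "okX A" "okX B"
  shows "continuous_on UNIV (\<lambda>z. yyF A B (fst z) (snd z))"
  unfolding yyF_def by (intro continuous_intros xx_cont assms)

lemma xx_cont_s: "okX A \<Longrightarrow> okX B \<Longrightarrow> continuous_on UNIV (xxF A B p)"
  unfolding xxF_def by (intro continuous_intros)

lemma yy_cont_s: "okX A \<Longrightarrow> okX B \<Longrightarrow> continuous_on UNIV (yyF A B p)"
  unfolding yyF_def xxF_def by (intro continuous_intros)

lemma xx_cont_p: "okX A \<Longrightarrow> okX B \<Longrightarrow> continuous_on UNIV (\<lambda>p. xxF A B p s)"
  unfolding xxF_def by (intro continuous_intros continuous_on_mult_left okX_cont)

lemma yy_cont_p: "okX A \<Longrightarrow> okX B \<Longrightarrow> continuous_on UNIV (\<lambda>p. yyF A B p s)"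
  unfolding yyF_def by (intro continuous_intros xx_cont_p)

lemma strict_bij:
  fixes f :: "real \<Rightarrow> real"
  assumes cont: "continuous_on UNIV f" and c: "c > 0" and d: "\<And>p q. p \<le> q \<Longrightarrow> f q - f p \<ge> c * (q - p)"
  shows "\<exists>!p. f p = y"
proof -
  define m where "m = \<bar>y - f 0\<bar> / c"
  have m: "m \<ge> 0" "c * m = \<bar>y - f 0\<bar>" using c by (auto simp: m_def)
  have "f m - f 0 \<ge> c * m" using d[of 0 m] m by simp
  hence hi: "y \<le> f m" using m by linarith
  have "f 0 - f (-m) \<ge> c * m" using d[of "-m" 0] m by simp
  hence lo: "f (-m) \<le> y" using m by linarith
  obtain p where "f p = y" using IVT'[of f "-m" y m] hi lo m continuous_on_subset[OF cont] by auto
  moreover have "p = p'" if "f p = y" "f p' = y" for p p'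
  proof (rule ccontr)
    assume "p \<noteq> p'"
    then consider "p < p'" | "p' < p" by linarith
    thus False
    proof cases
      case 1 with d[of p p'] c that show False by (smt (verit) mult_pos_pos)
    next
      case 2 with d[of p' p] c that show False by (smt (verit) mult_pos_pos)
    qed
  qed
  ultimately show ?thesis by blast
qed

lemma inv_cont:
  fixes q :: "real \<Rightarrow> real \<Rightarrow> real"
  assumes cs: "\<And>p. continuous_on UNIV (q p)"
    and mono: "\<And>s p p'. s \<in> snd ` E \<Longrightarrow> p \<le> p' \<Longrightarrow> q p s \<le> q p' s"
    and E: "\<And>a s. (a, s) \<in> E \<Longrightarrow> \<exists>!p. q p s = a"
  shows "continuous_on E (\<lambda>z. THE p. q p (snd z) = fst z)"
  unfolding continuous_on_iff
proof (intro ballI allI impI)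
  fix z0 and e :: real assume z0: "z0 \<in> E" and e: "e > 0"
  obtain a0 s0 where z0eq: "z0 = (a0, s0)" by (cases z0)
  define p0 where "p0 = (THE p. q p s0 = a0)"
  have ex0: "\<exists>!p. q p s0 = a0" using E z0 z0eq by auto
  have p0: "q p0 s0 = a0" unfolding p0_def using theI'[OF ex0] .
  have s0E: "s0 \<in> snd ` E" using z0 z0eq by force
  have up: "q (p0 + e) s0 > a0"
  proof -
    have "q (p0 + e) s0 \<ge> a0" using mono[OF s0E, of p0 "p0 + e"] p0 e by auto
    moreover have "q (p0 + e) s0 \<noteq> a0" using ex0 p0 e by (metis less_add_same_cancel1 order_less_irrefl)
    ultimately show ?thesis by auto
  qed
  have dn: "q (p0 - e) s0 < a0"
  proof -
    have "q (p0 - e) s0 \<le> a0" using mono[OF s0E, of "p0 - e" p0] p0 e by auto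
    moreover have "q (p0 - e) s0 \<noteq> a0"
    proof
      assume "q (p0 - e) s0 = a0"
      with ex0 p0 have "p0 - e = p0" by blast
      with e show False by simp
    qed
    ultimately show ?thesis by auto
  qed
  define d where "d = min (q (p0 + e) s0 - a0) (a0 - q (p0 - e) s0)"
  have d: "d > 0" using up dn by (auto simp: d_def)
  obtain d1 where d1: "d1 > 0" "\<forall>s. dist s s0 < d1 \<longrightarrow> dist (q (p0 + e) s) (q (p0 + e) s0) < d / 2"
    using cs[of "p0 + e"] d unfolding continuous_on_iff by (metis UNIV_I half_gt_zero)
  obtain d2 where d2: "d2 > 0" "\<forall>s. dist s s0 < d2 \<longrightarrow> dist (q (p0 - e) s) (q (p0 - e) s0) < d / 2"
    using cs[of "p0 - e"] d unfolding continuous_on_iff by (metis UNIV_I half_gt_zero)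
  show "\<exists>dd>0. \<forall>z\<in>E. dist z z0 < dd \<longrightarrow> dist (THE p. q p (snd z) = fst z) (THE p. q p (snd z0) = fst z0) < e"
  proof (intro exI[of _ "min (min d1 d2) (d / 2)"] conjI ballI impI)
    show "min (min d1 d2) (d / 2) > 0" using d1 d2 d by auto
    fix z assume z: "z \<in> E" and dz: "dist z z0 < min (min d1 d2) (d / 2)"
    obtain a s where zeq: "z = (a, s)" by (cases z)
    have exz: "\<exists>!p. q p s = a" using E z zeq by auto
    define p where "p = (THE p. q p s = a)"
    have pz: "q p s = a" unfolding p_def using theI'[OF exz] .
    have sE: "s \<in> snd ` E" using z zeq by force
    have ds: "dist s s0 \<le> dist z z0" "dist a a0 \<le> dist z z0"
      using zeq z0eq by (auto simp: dist_Pair_Pair real_sqrt_sum_squares_ge1 real_sqrt_sum_squares_ge2)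
    have qa: "\<bar>q (p0 + e) s - q (p0 + e) s0\<bar> < d/2" "\<bar>q (p0 - e) s - q (p0 - e) s0\<bar> < d/2"
      using d1 d2 ds dz by (auto simp: dist_real_def)
    have aa: "\<bar>a - a0\<bar> < d / 2" using ds dz by (auto simp: dist_real_def)
    have A1: "q (p0 + e) s > a" using qa aa d_def by (simp add: min_def split: if_splits; linarith)
    have A2: "q (p0 - e) s < a" using qa aa d_def by (simp add: min_def split: if_splits; linarith)
    have "p < p0 + e"
    proof (rule ccontr)
      assume "\<not> p < p0 + e"
      then have "q (p0 + e) s \<le> q p s" using mono[OF sE] by auto
      thus False using A1 pz by auto
    qed
    moreover have "p > p0 - e"
    proof (rule ccontr)
      assume "\<not> p > p0 - e"
      then have "q p s \<le> q (p0 - e) s" using mono[OF sE] by auto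
      thus False using A2 pz by auto
    qed
    ultimately show "dist (THE p. q p (snd z) = fst z) (THE p. q p (snd z0) = fst z0) < e"
      using zeq z0eq p_def p0_def by (auto simp: dist_real_def)
  qed
qed



lemma homeo_components:
  assumes hm: "homeomorphism S T f g" and C: "C \<in> components S"
  shows "f ` C \<in> components T"
proof -
  obtain x where x: "x \<in> S" and Ceq: "C = connected_component_set S x"
    using C by (auto simp: components_def)
  have fc: "continuous_on S f" "f ` S = T" "continuous_on T g" "g ` T = S"
    "\<And>y. y \<in> S \<Longrightarrow> g (f y) = y" "\<And>y. y \<in> T \<Longrightarrow> f (g y) = y"
    using hm unfolding homeomorphism_def by auto
  have fx: "f x \<in> T" using fc x by auto
  have 1: "f ` C \<subseteq> connected_component_set T (f x)"
  proof (rule connected_component_maximal)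
    show "f x \<in> f ` C" using Ceq x by simp
    show "connected (f ` C)" unfolding Ceq
      by (rule connected_continuous_image[OF continuous_on_subset[OF fc(1) connected_component_subset] connected_connected_component])
    show "f ` C \<subseteq> T" using Ceq connected_component_subset fc(2) by blast
  qed
  have 2: "g ` connected_component_set T (f x) \<subseteq> C"
    unfolding Ceq
  proof (rule connected_component_maximal)
    have "f x \<in> connected_component_set T (f x)" using fx by (simp add: mem_Collect_eq)
    then show "x \<in> g ` connected_component_set T (f x)" using fc(5)[OF x]
      by (metis image_eqI)
    show "connected (g ` connected_component_set T (f x))"
      by (rule connected_continuous_image[OF continuous_on_subset[OF fc(3) connected_component_subset] connected_connected_component])
    show "g ` connected_component_set T (f x) \<subseteq> S" using connected_component_subset fc(4) by blast
  qed
  have "connected_component_set T (f x) \<subseteq> f ` C"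
  proof
    fix y assume y: "y \<in> connected_component_set T (f x)"
    then have "y \<in> T" using connected_component_subset by blast
    then have "y = f (g y)" using fc by auto
    moreover have "g y \<in> C" using 2 y by auto
    ultimately show "y \<in> f ` C" by auto
  qed
  with 1 have "f ` C = connected_component_set T (f x)" by auto
  thus ?thesis using fx by (auto simp: components_def)
qed

lemma strip_struct:
  assumes "is_strip S"
  obtains u v where "u < v" "strip_lo S = u" "strip_hi S = v" "UNIV \<times> {u<..<v} \<subseteq> S"
    "S \<subseteq> UNIV \<times> {u..v}" "open {a. (a, u) \<in> S}" "open {a. (a, v) \<in> S}"
proof -
  obtain u v where uv: "u < v" "UNIV \<times> {u<..<v} \<subseteq> S" "S \<subseteq> UNIV \<times> {u..v}"
    and op: "openin (top_of_set (UNIV \<times> {u..v})) S"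
    using assms unfolding is_strip_def by blast
  obtain T where T: "open T" "S = T \<inter> (UNIV \<times> {u..v})" using op by (auto simp: openin_open)
  have mid: "(0, (u + v) / 2) \<in> S" using uv by auto
  have lo: "strip_lo S = u" unfolding strip_lo_def
  proof (rule cInf_eq_non_empty)
    show "snd ` S \<noteq> {}" using mid by auto
    show "\<And>x. x \<in> snd ` S \<Longrightarrow> u \<le> x" using uv by auto
    fix y assume y: "\<And>x. x \<in> snd ` S \<Longrightarrow> y \<le> x"
    show "y \<le> u"
    proof (rule ccontr)
      assume "\<not> y \<le> u"
      define x where "x = (u + min y v) / 2"
      have "(0, x) \<in> S" using uv \<open>\<not> y \<le> u\<close> by (auto simp: x_def)
      then have "y \<le> x" using y by force
      thus False using \<open>\<not> y \<le> u\<close> uv by (auto simp: x_def)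
    qed
  qed
  have hi: "strip_hi S = v" unfolding strip_hi_def
  proof (rule cSup_eq_non_empty)
    show "snd ` S \<noteq> {}" using mid by auto
    show "\<And>x. x \<in> snd ` S \<Longrightarrow> x \<le> v" using uv by auto
    fix y assume y: "\<And>x. x \<in> snd ` S \<Longrightarrow> x \<le> y"
    show "v \<le> y"
    proof (rule ccontr)
      assume "\<not> v \<le> y"
      define x where "x = (v + max y u) / 2"
      have "(0, x) \<in> S" using uv \<open>\<not> v \<le> y\<close> by (auto simp: x_def)
      then have "x \<le> y" using y by force
      thus False using \<open>\<not> v \<le> y\<close> uv by (auto simp: x_def)
    qed
  qed
  have cu: "continuous_on UNIV (\<lambda>a::real. (a, c))" for c :: real by (intro continuous_intros)
  have "{a. (a, u) \<in> S} = (\<lambda>a. (a, u)) -` T" using T uv by auto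
  moreover have "open ((\<lambda>a. (a, u)) -` T)" using open_vimage[OF T(1) cu] .
  moreover have "{a. (a, v) \<in> S} = (\<lambda>a. (a, v)) -` T" using T uv by auto
  moreover have "open ((\<lambda>a. (a, v)) -` T)" using open_vimage[OF T(1) cu] .
  ultimately show ?thesis using that uv lo hi by auto
qed



locale stripsetup =
  fixes S1 S2 :: "(real \<times> real) set" and h h' :: "real \<times> real \<Rightarrow> real \<times> real"
    and u1 v1 u2 v2 :: real
  assumes uv1: "u1 < v1" and uv2: "u2 < v2"
    and in1: "UNIV \<times> {u1<..<v1} \<subseteq> S1" and sub1: "S1 \<subseteq> UNIV \<times> {u1..v1}"
    and in2: "UNIV \<times> {u2<..<v2} \<subseteq> S2" and sub2: "S2 \<subseteq> UNIV \<times> {u2..v2}"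
    and opB1: "open {a. (a, u1) \<in> S1}" and opT1: "open {a. (a, v1) \<in> S1}"
    and opB2: "open {a. (a, u2) \<in> S2}" and opT2: "open {a. (a, v2) \<in> S2}"
    and hm: "homeomorphism {p\<in>S1. snd p = u1 \<or> snd p = v1} {p\<in>S2. snd p = u2 \<or> snd p = v2} h h'"
    and mon: "monotone_bd {p\<in>S1. snd p = u1 \<or> snd p = v1} h"
begin

abbreviation "bd1 \<equiv> {p\<in>S1. snd p = u1 \<or> snd p = v1}"
abbreviation "bd2 \<equiv> {p\<in>S2. snd p = u2 \<or> snd p = v2}"
abbreviation "B1 \<equiv> {a. (a, u1) \<in> S1}"
abbreviation "T1 \<equiv> {a. (a, v1) \<in> S1}"

lemma h_facts:
  "continuous_on bd1 h" "h ` bd1 = bd2" "\<And>p. p \<in> bd1 \<Longrightarrow> h' (h p) = p" "\<And>p. p \<in> bd1 \<Longrightarrow> h p \<in> bd2"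
  using hm unfolding homeomorphism_def by auto

definition "P \<longleftrightarrow> preserves_order bd1 h"
definition "\<sigma> = (if P then 1 else -1 :: real)"

lemma sigma_sq: "\<sigma> * \<sigma> = 1" by (simp add: \<sigma>_def)

lemma O1:
  assumes "p \<in> bd1" "q \<in> bd1" "bd_less p q"
  shows "if P then bd_less (h p) (h q) else bd_less (h q) (h p)"
proof (cases P)
  case True
  then have "\<forall>a\<in>bd1. \<forall>a'\<in>bd1. bd_less a a' \<longleftrightarrow> bd_less (h a) (h a')" unfolding P_def preserves_order_def .
  then have "bd_less p q \<longleftrightarrow> bd_less (h p) (h q)" using assms(1,2) by blast
  then show ?thesis using True assms(3) by simp
next
  case False
  then have "reverses_order bd1 h" using mon unfolding P_def monotone_bd_def by simp
  then have "\<forall>a\<in>bd1. \<forall>a'\<in>bd1. bd_less a a' \<longleftrightarrow> bd_less (h a') (h a)" unfolding reverses_order_def .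
  then have "bd_less p q \<longleftrightarrow> bd_less (h q) (h p)" using assms(1,2) by blast
  then show ?thesis using False assms(3) by simp
qed

lemma O2:
  assumes "p \<in> bd1" "q \<in> bd1" "\<not> bd_less p q" "\<not> bd_less q p"
  shows "\<not> bd_less (h p) (h q)"
proof (cases P)
  case True
  then have "\<forall>a\<in>bd1. \<forall>a'\<in>bd1. bd_less a a' \<longleftrightarrow> bd_less (h a) (h a')" unfolding P_def preserves_order_def .
  then have "bd_less p q \<longleftrightarrow> bd_less (h p) (h q)" using assms(1,2) by blast
  then show ?thesis using assms(3) by simp
next
  case False
  then have "reverses_order bd1 h" using mon unfolding P_def monotone_bd_def by simp
  then have "\<forall>a\<in>bd1. \<forall>a'\<in>bd1. bd_less a a' \<longleftrightarrow> bd_less (h a') (h a)" unfolding reverses_order_def .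
  then have "bd_less q p \<longleftrightarrow> bd_less (h p) (h q)" using assms(1,2) by blast
  then show ?thesis using assms(4) by simp
qed

lemma C1:
  assumes "p \<in> bd1" "q \<in> bd1" "snd p = snd q"
  shows "snd (h p) = snd (h q)"
proof -
  consider "fst p < fst q" | "fst p = fst q" | "fst q < fst p" by linarith
  thus ?thesis
  proof cases
    case 1 then have "bd_less p q" using assms by (simp add: bd_less_def)
    from O1[OF assms(1,2) this] show ?thesis by (auto simp: bd_less_def split: if_splits)
  next
    case 2 then have "p = q" using assms by (simp add: prod_eq_iff)
    thus ?thesis by simp
  next
    case 3 then have "bd_less q p" using assms by (simp add: bd_less_def)
    from O1[OF assms(2,1) this] show ?thesis by (auto simp: bd_less_def split: if_splits)
  qed
qed

lemma C2:
  assumes "p \<in> bd1" "q \<in> bd1" "snd p \<noteq> snd q"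
  shows "snd (h p) \<noteq> snd (h q)"
proof
  assume eq: "snd (h p) = snd (h q)"
  have "p \<noteq> q" using assms by auto
  have "h p \<noteq> h q"
  proof
    assume "h p = h q"
    then have "h' (h p) = h' (h q)" by simp
    then show False using h_facts(3)[OF assms(1)] h_facts(3)[OF assms(2)] \<open>p \<noteq> q\<close> by simp
  qed
  then have "fst (h p) \<noteq> fst (h q)" using eq by (simp add: prod_eq_iff)
  then have "bd_less (h p) (h q) \<or> bd_less (h q) (h p)" using eq by (auto simp: bd_less_def)
  moreover have "\<not> bd_less p q" "\<not> bd_less q p" using assms by (auto simp: bd_less_def)
  ultimately show False using O2[OF assms(1,2)] O2[OF assms(2,1)] by blast
qed

lemma bd2_snd: "p \<in> bd2 \<Longrightarrow> snd p = u2 \<or> snd p = v2" by auto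

definition "sw \<longleftrightarrow> (\<exists>a\<in>B1. snd (h (a, u1)) = v2) \<or> (\<exists>a\<in>T1. snd (h (a, v1)) = u2)"
definition "lin2 s = (if sw then v2 - s * (v2 - u2) else u2 + s * (v2 - u2))"

lemma hB: assumes "a \<in> B1" shows "snd (h (a, u1)) = lin2 0"
proof -
  have m: "(a, u1) \<in> bd1" using assms by auto
  have s: "snd (h (a, u1)) = u2 \<or> snd (h (a, u1)) = v2" using h_facts(4)[OF m] by auto
  show ?thesis
  proof (cases sw)
    case True
    then consider a' where "a' \<in> B1" "snd (h (a', u1)) = v2" | a' where "a' \<in> T1" "snd (h (a', v1)) = u2"
      unfolding sw_def by blast
    then show ?thesis
    proof cases
      case 1 then show ?thesis using C1[OF m, of "(a', u1)"] True by (auto simp: lin2_def)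
    next
      case 2 then show ?thesis using C2[OF m, of "(a', v1)"] True s uv1 by (auto simp: lin2_def)
    qed
  next
    case False
    then show ?thesis using s assms unfolding sw_def lin2_def by auto
  qed
qed

lemma hT: assumes "a \<in> T1" shows "snd (h (a, v1)) = lin2 1"
proof -
  have m: "(a, v1) \<in> bd1" using assms by auto
  have s: "snd (h (a, v1)) = u2 \<or> snd (h (a, v1)) = v2" using h_facts(4)[OF m] by auto
  show ?thesis
  proof (cases sw)
    case True
    then consider a' where "a' \<in> B1" "snd (h (a', u1)) = v2" | a' where "a' \<in> T1" "snd (h (a', v1)) = u2"
      unfolding sw_def by blast
    then show ?thesis
    proof cases
      case 1 then show ?thesis using C2[OF m, of "(a', u1)"] True s uv1 by (auto simp: lin2_def)
    next
      case 2 then show ?thesis using C1[OF m, of "(a', v1)"] True by (auto simp: lin2_def)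
    qed
  next
    case False
    then have "snd (h (a, v1)) \<noteq> u2" using assms unfolding sw_def by auto
    then show ?thesis using s False unfolding lin2_def by auto
  qed
qed

lemma lin2_01: "lin2 0 \<noteq> lin2 1" "lin2 0 = u2 \<or> lin2 0 = v2" "lin2 1 = u2 \<or> lin2 1 = v2"
  "{lin2 0, lin2 1} = {u2, v2}"
  using uv2 by (auto simp: lin2_def)

definition "\<alpha> a = \<sigma> * fst (h (a, u1))"
definition "\<beta> a = \<sigma> * fst (h (a, v1))"

lemma incr_alpha: "incr_on B1 \<alpha>"
  unfolding incr_on_def
proof (intro ballI impI)
  fix z w assume z: "z \<in> B1" and w: "w \<in> B1" and zw: "z < w"
  have "bd_less (z, u1) (w, u1)" using zw by (simp add: bd_less_def)
  from O1[OF _ _ this] z w show "\<alpha> z < \<alpha> w"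
    by (auto simp: \<alpha>_def \<sigma>_def bd_less_def split: if_splits)
qed

lemma incr_beta: "incr_on T1 \<beta>"
  unfolding incr_on_def
proof (intro ballI impI)
  fix z w assume z: "z \<in> T1" and w: "w \<in> T1" and zw: "z < w"
  have "bd_less (z, v1) (w, v1)" using zw by (simp add: bd_less_def)
  from O1[OF _ _ this] z w show "\<beta> z < \<beta> w"
    by (auto simp: \<beta>_def \<sigma>_def bd_less_def split: if_splits)
qed

lemma cont_alpha: "continuous_on B1 \<alpha>"
proof -
  have "continuous_on B1 (\<lambda>a. h (a, u1))"
    by (rule continuous_on_compose2[OF h_facts(1)]) (auto intro!: continuous_intros)
  then show ?thesis unfolding \<alpha>_def by (intro continuous_intros)
qed

lemma cont_beta: "continuous_on T1 \<beta>"
proof -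
  have "continuous_on T1 (\<lambda>a. h (a, v1))"
    by (rule continuous_on_compose2[OF h_facts(1)]) (auto intro!: continuous_intros)
  then show ?thesis unfolding \<beta>_def by (intro continuous_intros)
qed

lemma surjB: assumes "(b, lin2 0) \<in> S2" shows "\<exists>a\<in>B1. \<alpha> a = \<sigma> * b"
proof -
  have "(b, lin2 0) \<in> bd2" using assms lin2_01 by auto
  then have "(b, lin2 0) \<in> h ` bd1" using h_facts(2) by simp
  then obtain q where q: "q \<in> bd1" "(b, lin2 0) = h q" by (rule imageE)
  obtain a y where qa: "q = (a, y)" by (cases q)
  have "y = u1"
  proof (rule ccontr)
    assume "y \<noteq> u1"
    then have "y = v1" "a \<in> T1" using q qa by auto
    then show False using hT[of a] q qa lin2_01(1) by (metis snd_conv)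
  qed
  then have "a \<in> B1" "fst (h (a, u1)) = b" using q qa by (auto, metis fst_conv)
  then show ?thesis by (auto simp: \<alpha>_def)
qed

lemma surjT: assumes "(b, lin2 1) \<in> S2" shows "\<exists>a\<in>T1. \<beta> a = \<sigma> * b"
proof -
  have "(b, lin2 1) \<in> bd2" using assms lin2_01 by auto
  then have "(b, lin2 1) \<in> h ` bd1" using h_facts(2) by simp
  then obtain q where q: "q \<in> bd1" "(b, lin2 1) = h q" by (rule imageE)
  obtain a y where qa: "q = (a, y)" by (cases q)
  have "y = v1"
  proof (rule ccontr)
    assume "y \<noteq> v1"
    then have "y = u1" "a \<in> B1" using q qa by auto
    then show False using hB[of a] q qa lin2_01(1) by (metis snd_conv)
  qed
  then have "a \<in> T1" "fst (h (a, v1)) = b" using q qa by (auto, metis fst_conv)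
  then show ?thesis by (auto simp: \<beta>_def)
qed

end


context stripsetup begin

definition "AA = XF B1 \<alpha>"
definition "BB = XF T1 \<beta>"
abbreviation "xx \<equiv> xxF AA BB"
abbreviation "yy \<equiv> yyF AA BB"
definition "sc y = (y - u1) / (v1 - u1)"
definition "lin1 s = u1 + s * (v1 - u1)"
definition "sc2 y = (if sw then (v2 - y) / (v2 - u2) else (y - u2) / (v2 - u2))"
definition "pinv = (\<lambda>z. THE p. xx p (snd z) = fst z)"
definition "qinv = (\<lambda>z. THE p. yy p (snd z) = fst z)"
definition "FF z = (\<sigma> * yy (pinv (fst z, sc (snd z))) (sc (snd z)), lin2 (sc (snd z)))"
definition "GG z = (xx (qinv (\<sigma> * fst z, sc2 (snd z))) (sc2 (snd z)), lin1 (sc2 (snd z)))"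

lemma okA: "okX AA" unfolding AA_def by (rule okX_XF[OF incr_alpha])
lemma okB: "okX BB" unfolding BB_def by (rule okX_XF[OF incr_beta])

lemma xx0: "xx p 0 = AA p" and xx1: "xx p 1 = BB p" and yy0: "yy p 0 = p - AA p" and yy1: "yy p 1 = p - BB p"
  by (simp_all add: xxF_def yyF_def)

lemma xx0': "xx p 0 = XF B1 \<alpha> p" and xx1': "xx p 1 = XF T1 \<beta> p"
  and yy0': "yy p 0 = p - XF B1 \<alpha> p" and yy1': "yy p 1 = p - XF T1 \<beta> p"
  by (simp_all add: xxF_def yyF_def AA_def BB_def)

lemma arith:
  "sc (lin1 s) = s" "lin1 (sc y) = y" "sc2 (lin2 s) = s" "lin2 (sc2 y) = y" "sc u1 = 0" "sc v1 = 1"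
  "lin1 0 = u1" "lin1 1 = v1"
  using uv1 uv2 by (auto simp: sc_def lin1_def sc2_def lin2_def field_simps)

lemma sc_int: "u1 < y \<Longrightarrow> y < v1 \<Longrightarrow> 0 < sc y \<and> sc y < 1"
  using uv1 by (auto simp: sc_def field_simps)
lemma sc_rng: "u1 \<le> y \<Longrightarrow> y \<le> v1 \<Longrightarrow> 0 \<le> sc y \<and> sc y \<le> 1"
  using uv1 by (auto simp: sc_def field_simps)
lemma sc2_int: "u2 < y \<Longrightarrow> y < v2 \<Longrightarrow> 0 < sc2 y \<and> sc2 y < 1"
  using uv2 by (auto simp: sc2_def field_simps)
lemma sc2_rng: "u2 \<le> y \<Longrightarrow> y \<le> v2 \<Longrightarrow> 0 \<le> sc2 y \<and> sc2 y \<le> 1"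
  using uv2 by (auto simp: sc2_def field_simps)
lemma lin1_int: "0 < s \<Longrightarrow> s < 1 \<Longrightarrow> u1 < lin1 s \<and> lin1 s < v1"
  using uv1 by (auto simp: lin1_def) (smt (verit) mult_less_cancel_right2)
lemma lin2_int: "0 < s \<Longrightarrow> s < 1 \<Longrightarrow> u2 < lin2 s \<and> lin2 s < v2"
  using uv2 by (auto simp: lin2_def) (smt (verit) mult_less_cancel_right2)+

lemma S1_cases:
  assumes "(a, y) \<in> S1"
  obtains "u1 < y" "y < v1" | "y = u1" "a \<in> B1" | "y = v1" "a \<in> T1"
  using assms sub1 by fastforce

lemma S2_cases:
  assumes "(b, y) \<in> S2"
  obtains "u2 < y" "y < v2" | "y = lin2 0" | "y = lin2 1"
  using assms sub2 lin2_01(4) by fastforce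

lemma S1_rng: "(a, y) \<in> S1 \<Longrightarrow> 0 \<le> sc y \<and> sc y \<le> 1"
  using sub1 sc_rng by fastforce
lemma S2_rng: "(b, y) \<in> S2 \<Longrightarrow> 0 \<le> sc2 y \<and> sc2 y \<le> 1"
  using sub2 sc2_rng by fastforce

lemma ex_inner_x: assumes "0 < s" "s < 1" shows "\<exists>!p. xx p s = w"
proof (rule strict_bij[OF xx_cont_p[OF okA okB], of "s * (1 - s)"])
  show "0 < s * (1 - s)" using assms by simp
  fix p q :: real assume "p \<le> q"
  then show "s * (1 - s) * (q - p) \<le> xx q s - xx p s" using xx_diff[OF okA okB] assms by simp
qed
lemma ex_inner_y: assumes "0 < s" "s < 1" shows "\<exists>!p. yy p s = w"
proof (rule strict_bij[OF yy_cont_p[OF okA okB], of "s * (1 - s)"])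
  show "0 < s * (1 - s)" using assms by simp
  fix p q :: real assume "p \<le> q"
  then show "s * (1 - s) * (q - p) \<le> yy q s - yy p s" using yy_diff[OF okA okB] assms by simp
qed

lemma exB_x: assumes "a \<in> B1" shows "\<exists>!p. xx p 0 = a"
proof -
  have h1: "XF B1 \<alpha> (a + \<alpha> a) = a" by (rule XF_at[OF incr_alpha assms])
  have h2: "\<And>p. XF B1 \<alpha> p = a \<Longrightarrow> p = a + \<alpha> a" by (rule XF_uniq_x[OF incr_alpha assms opB1 cont_alpha])
  show ?thesis using h1 h2 unfolding xx0' by blast
qed
lemma exT_x: assumes "a \<in> T1" shows "\<exists>!p. xx p 1 = a"
proof -
  have h1: "XF T1 \<beta> (a + \<beta> a) = a" by (rule XF_at[OF incr_beta assms])
  have h2: "\<And>p. XF T1 \<beta> p = a \<Longrightarrow> p = a + \<beta> a" by (rule XF_uniq_x[OF incr_beta assms opT1 cont_beta])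
  show ?thesis using h1 h2 unfolding xx1' by blast
qed
lemma exB_y: assumes "a \<in> B1" shows "\<exists>!p. yy p 0 = \<alpha> a"
proof -
  have h1: "a + \<alpha> a - XF B1 \<alpha> (a + \<alpha> a) = \<alpha> a" using XF_at[OF incr_alpha assms] by simp
  have h2: "\<And>p. p - XF B1 \<alpha> p = \<alpha> a \<Longrightarrow> p = a + \<alpha> a" by (rule XF_uniq_y[OF incr_alpha assms opB1])
  show ?thesis using h1 h2 unfolding yy0' by blast
qed
lemma exT_y: assumes "a \<in> T1" shows "\<exists>!p. yy p 1 = \<beta> a"
proof -
  have h1: "a + \<beta> a - XF T1 \<beta> (a + \<beta> a) = \<beta> a" using XF_at[OF incr_beta assms] by simp
  have h2: "\<And>p. p - XF T1 \<beta> p = \<beta> a \<Longrightarrow> p = a + \<beta> a" by (rule XF_uniq_y[OF incr_beta assms opT1])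
  show ?thesis using h1 h2 unfolding yy1' by blast
qed

lemma EX1: assumes "(a, y) \<in> S1" shows "\<exists>!p. xx p (sc y) = a"
  using assms
proof (cases rule: S1_cases)
  case 1 then show ?thesis using sc_int ex_inner_x by blast
next
  case 2 then show ?thesis using exB_x arith by simp
next
  case 3 then show ?thesis using exT_x arith by simp
qed

lemma EY1: assumes "(b, y) \<in> S2" shows "\<exists>!p. yy p (sc2 y) = \<sigma> * b"
  using assms
proof (cases rule: S2_cases)
  case 1 then show ?thesis using sc2_int ex_inner_y by blast
next
  case 2 
  then obtain a where "a \<in> B1" "\<alpha> a = \<sigma> * b" using surjB assms by blast
  then show ?thesis using exB_y 2 arith by metis
next
  case 3
  then obtain a where "a \<in> T1" "\<beta> a = \<sigma> * b" using surjT assms by blast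
  then show ?thesis using exT_y 3 arith by metis
qed

lemma FF_B: assumes "a \<in> B1" shows "FF (a, u1) = h (a, u1)"
proof -
  have "xx (a + \<alpha> a) 0 = a" unfolding xx0' using XF_at[OF incr_alpha assms] .
  then have pi: "pinv (a, sc u1) = a + \<alpha> a"
    unfolding pinv_def arith using the1_equality[OF exB_x[OF assms]] by simp
  have "yy (a + \<alpha> a) 0 = \<alpha> a" unfolding yy0' using XF_at[OF incr_alpha assms] by simp
  then have "FF (a, u1) = (\<sigma> * \<alpha> a, lin2 0)" unfolding FF_def using pi arith by simp
  also have "\<dots> = h (a, u1)" using hB[OF assms] sigma_sq
    by (simp add: \<alpha>_def prod_eq_iff mult.assoc[symmetric])
  finally show ?thesis .
qed

lemma FF_T: assumes "a \<in> T1" shows "FF (a, v1) = h (a, v1)"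
proof -
  have "xx (a + \<beta> a) 1 = a" unfolding xx1' using XF_at[OF incr_beta assms] .
  then have pi: "pinv (a, sc v1) = a + \<beta> a"
    unfolding pinv_def arith using the1_equality[OF exT_x[OF assms]] by simp
  have "yy (a + \<beta> a) 1 = \<beta> a" unfolding yy1' using XF_at[OF incr_beta assms] by simp
  then have "FF (a, v1) = (\<sigma> * \<beta> a, lin2 1)" unfolding FF_def using pi arith by simp
  also have "\<dots> = h (a, v1)" using hT[OF assms] sigma_sq
    by (simp add: \<beta>_def prod_eq_iff mult.assoc[symmetric])
  finally show ?thesis .
qed

lemma FF_h: "p \<in> bd1 \<Longrightarrow> FF p = h p"
  using FF_B FF_T by (cases p) auto

lemma FF_in: assumes "z \<in> S1" shows "FF z \<in> S2"
proof -
  obtain a y where z: "z = (a, y)" by (cases z)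
  show ?thesis using assms[unfolded z]
  proof (cases rule: S1_cases)
    case 1
    then have "u2 < lin2 (sc y) \<and> lin2 (sc y) < v2" using sc_int lin2_int by blast
    then show ?thesis using in2 z by (auto simp: FF_def)
  next
    case 2 then show ?thesis using z FF_B h_facts(4)[of "(a, u1)"] by auto
  next
    case 3 then show ?thesis using z FF_T h_facts(4)[of "(a, v1)"] by auto
  qed
qed

lemma qinv_prop: assumes "(b, y) \<in> S2" shows "yy (qinv (\<sigma> * b, sc2 y)) (sc2 y) = \<sigma> * b"
  unfolding qinv_def using theI'[OF EY1[OF assms]] by simp

lemma pinv_prop: assumes "(a, y) \<in> S1" shows "xx (pinv (a, sc y)) (sc y) = a"
  unfolding pinv_def using theI'[OF EX1[OF assms]] by simp

lemma GG_in: assumes "z \<in> S2" shows "GG z \<in> S1"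
proof -
  obtain b y where z: "z = (b, y)" by (cases z)
  define p where "p = qinv (\<sigma> * b, sc2 y)"
  have yp: "yy p (sc2 y) = \<sigma> * b" using qinv_prop assms z p_def by simp
  show ?thesis using assms[unfolded z]
  proof (cases rule: S2_cases)
    case 1
    then have "u1 < lin1 (sc2 y) \<and> lin1 (sc2 y) < v1" using sc2_int lin1_int by blast
    then show ?thesis using in1 z by (auto simp: GG_def)
  next
    case 2
    then obtain a where a: "a \<in> B1" "\<alpha> a = \<sigma> * b" using surjB assms z by blast
    have s0: "sc2 y = 0" using 2 arith by simp
    have "yy (a + \<alpha> a) 0 = \<alpha> a" unfolding yy0' using XF_at[OF incr_alpha a(1)] by simp
    then have "p = a + \<alpha> a" using exB_y[OF a(1)] yp s0 a(2) by metis
    then have "GG z = (a, u1)" using z s0 arith XF_at[OF incr_alpha a(1)]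
      by (simp add: GG_def p_def xx0')
    then show ?thesis using a by simp
  next
    case 3
    then obtain a where a: "a \<in> T1" "\<beta> a = \<sigma> * b" using surjT assms z by blast
    have s0: "sc2 y = 1" using 3 arith by simp
    have "yy (a + \<beta> a) 1 = \<beta> a" unfolding yy1' using XF_at[OF incr_beta a(1)] by simp
    then have "p = a + \<beta> a" using exT_y[OF a(1)] yp s0 a(2) by metis
    then have "GG z = (a, v1)" using z s0 arith XF_at[OF incr_beta a(1)]
      by (simp add: GG_def p_def xx1')
    then show ?thesis using a by simp
  qed
qed

lemma GF: assumes "z \<in> S1" shows "GG (FF z) = z"
proof -
  obtain a y where z: "z = (a, y)" by (cases z)
  define s where "s = sc y"
  define p where "p = pinv (a, s)"
  have xp: "xx p s = a" using pinv_prop assms z p_def s_def by simp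
  have Fz: "FF z = (\<sigma> * yy p s, lin2 s)" using z by (simp add: FF_def p_def s_def)
  have "(\<sigma> * yy p s, lin2 s) \<in> S2" using FF_in[OF assms] Fz by simp
  from EY1[OF this] have "\<exists>!p'. yy p' s = yy p s" using arith sigma_sq by (simp add: mult.assoc[symmetric])
  then have "qinv (\<sigma> * (\<sigma> * yy p s), s) = p" unfolding qinv_def using sigma_sq
    by (simp add: mult.assoc[symmetric] the1_equality)
  then show ?thesis using Fz xp z arith by (simp add: GG_def s_def)
qed

lemma FG: assumes "z \<in> S2" shows "FF (GG z) = z"
proof -
  obtain b y where z: "z = (b, y)" by (cases z)
  define s where "s = sc2 y"
  define p where "p = qinv (\<sigma> * b, s)"
  have yp: "yy p s = \<sigma> * b" using qinv_prop assms z p_def s_def by simp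
  have Gz: "GG z = (xx p s, lin1 s)" using z by (simp add: GG_def p_def s_def)
  have "(xx p s, lin1 s) \<in> S1" using GG_in[OF assms] Gz by simp
  from EX1[OF this] have "\<exists>!p'. xx p' s = xx p s" using arith by simp
  then have "pinv (xx p s, s) = p" unfolding pinv_def by (simp add: the1_equality)
  then show ?thesis using Gz yp z arith sigma_sq by (simp add: FF_def s_def mult.assoc[symmetric])
qed

end


context stripsetup begin

lemma cont_lin2: "continuous_on UNIV lin2"
  by (cases sw) (auto simp: lin2_def intro!: continuous_intros)
lemma cont_sc2: "continuous_on UNIV sc2"
  using uv2 by (cases sw) (auto simp: sc2_def intro!: continuous_intros)
lemma cont_sc: "continuous_on UNIV sc"
  using uv1 unfolding sc_def by (intro continuous_intros) auto
lemma cont_lin1: "continuous_on UNIV lin1"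
  unfolding lin1_def by (intro continuous_intros)

lemma cont_pinv: "continuous_on ((\<lambda>z. (fst z, sc (snd z))) ` S1) pinv"
  unfolding pinv_def
proof (rule inv_cont)
  show "\<And>p. continuous_on UNIV (xx p)" by (rule xx_cont_s[OF okA okB])
  fix s p p' :: real assume s: "s \<in> snd ` (\<lambda>z. (fst z, sc (snd z))) ` S1" and pp: "p \<le> p'"
  then have "\<exists>z\<in>S1. s = sc (snd z)" by (simp add: image_image image_iff)
  then obtain z where z: "z \<in> S1" "s = sc (snd z)" by blast
  then have "(fst z, snd z) \<in> S1" by simp
  from S1_rng[OF this] z(2) have "0 \<le> s" "s \<le> 1" by simp_all
  then show "xx p s \<le> xx p' s" using xx_mono[OF okA okB] pp by blast
next
  fix a s assume "(a, s) \<in> (\<lambda>z. (fst z, sc (snd z))) ` S1"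
  then obtain z where z: "z \<in> S1" "(a, s) = (fst z, sc (snd z))" by (rule imageE)
  then have "(fst z, snd z) \<in> S1" by simp
  from EX1[OF this] z(2) show "\<exists>!p. xx p s = a" by simp
qed

lemma cont_qinv: "continuous_on ((\<lambda>z. (\<sigma> * fst z, sc2 (snd z))) ` S2) qinv"
  unfolding qinv_def
proof (rule inv_cont)
  show "\<And>p. continuous_on UNIV (yy p)" by (rule yy_cont_s[OF okA okB])
  fix s p p' :: real assume s: "s \<in> snd ` (\<lambda>z. (\<sigma> * fst z, sc2 (snd z))) ` S2" and pp: "p \<le> p'"
  then have "\<exists>z\<in>S2. s = sc2 (snd z)" by (simp add: image_image image_iff)
  then obtain z where z: "z \<in> S2" "s = sc2 (snd z)" by blast
  then have "(fst z, snd z) \<in> S2" by simp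
  from S2_rng[OF this] z(2) have "0 \<le> s" "s \<le> 1" by simp_all
  then show "yy p s \<le> yy p' s" using yy_mono[OF okA okB] pp by blast
next
  fix a s assume "(a, s) \<in> (\<lambda>z. (\<sigma> * fst z, sc2 (snd z))) ` S2"
  then obtain z where z: "z \<in> S2" "(a, s) = (\<sigma> * fst z, sc2 (snd z))" by (rule imageE)
  then have "(fst z, snd z) \<in> S2" by simp
  from EY1[OF this] z(2) show "\<exists>!p. yy p s = a" by simp
qed

lemma cont_FF: "continuous_on S1 FF"
proof -
  have i1: "continuous_on S1 (\<lambda>z. (fst z, sc (snd z)))"
    by (intro continuous_intros continuous_on_compose2[OF cont_sc]) auto
  have i2: "continuous_on S1 (\<lambda>z. pinv (fst z, sc (snd z)))"
    by (rule continuous_on_compose2[OF cont_pinv i1]) auto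
  have scc: "continuous_on S1 (\<lambda>z. sc (snd z))"
    by (rule continuous_on_compose2[OF cont_sc]) (auto intro: continuous_intros)
  have i3: "continuous_on S1 (\<lambda>z. (pinv (fst z, sc (snd z)), sc (snd z)))"
    by (intro continuous_on_Pair i2 scc)
  have i4: "continuous_on S1 (\<lambda>z. yy (pinv (fst z, sc (snd z))) (sc (snd z)))"
    using continuous_on_compose2[OF yy_cont[OF okA okB] i3] by simp
  have i5: "continuous_on S1 (\<lambda>z. lin2 (sc (snd z)))"
    by (rule continuous_on_compose2[OF cont_lin2 scc]) auto
  show ?thesis unfolding FF_def by (intro continuous_on_Pair continuous_intros i4 i5)
qed

lemma cont_GG: "continuous_on S2 GG"
proof -
  have scc: "continuous_on S2 (\<lambda>z. sc2 (snd z))"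
    by (rule continuous_on_compose2[OF cont_sc2]) (auto intro: continuous_intros)
  have i1: "continuous_on S2 (\<lambda>z. (\<sigma> * fst z, sc2 (snd z)))"
    by (intro continuous_on_Pair continuous_intros scc)
  have i2: "continuous_on S2 (\<lambda>z. qinv (\<sigma> * fst z, sc2 (snd z)))"
    by (rule continuous_on_compose2[OF cont_qinv i1]) auto
  have i3: "continuous_on S2 (\<lambda>z. (qinv (\<sigma> * fst z, sc2 (snd z)), sc2 (snd z)))"
    by (intro continuous_on_Pair i2 scc)
  have i4: "continuous_on S2 (\<lambda>z. xx (qinv (\<sigma> * fst z, sc2 (snd z))) (sc2 (snd z)))"
    using continuous_on_compose2[OF xx_cont[OF okA okB] i3] by simp
  have i5: "continuous_on S2 (\<lambda>z. lin1 (sc2 (snd z)))"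
    by (rule continuous_on_compose2[OF cont_lin1 scc]) auto
  show ?thesis unfolding GG_def by (intro continuous_on_Pair continuous_intros i4 i5)
qed

lemma homeo: "homeomorphism S1 S2 FF GG"
  unfolding homeomorphism_def
proof (intro conjI ballI)
  show "FF ` S1 = S2"
  proof
    show "FF ` S1 \<subseteq> S2" using FF_in by auto
    show "S2 \<subseteq> FF ` S1"
    proof
      fix z assume "z \<in> S2"
      then have "z = FF (GG z)" "GG z \<in> S1" using FG GG_in by auto
      then show "z \<in> FF ` S1" by (rule image_eqI)
    qed
  qed
  show "GG ` S2 = S1"
  proof
    show "GG ` S2 \<subseteq> S1" using GG_in by auto
    show "S1 \<subseteq> GG ` S2"
    proof
      fix z assume "z \<in> S1"
      then have "z = GG (FF z)" "FF z \<in> S2" using GF FF_in by auto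
      then show "z \<in> GG ` S2" by (rule image_eqI)
    qed
  qed
next
  show "continuous_on S1 FF" by (rule cont_FF)
  show "continuous_on S2 GG" by (rule cont_GG)
  fix x assume "x \<in> S1" then show "GG (FF x) = x" by (rule GF)
next
  fix y assume "y \<in> S2" then show "FF (GG y) = y" by (rule FG)
qed

lemma FF_line:
  assumes "u1 < t" "t < v1"
  shows "FF ` (UNIV \<times> {t}) = UNIV \<times> {lin2 (sc t)}" "u2 < lin2 (sc t)" "lin2 (sc t) < v2"
proof -
  have s: "0 < sc t" "sc t < 1" using sc_int assms by auto
  show l: "u2 < lin2 (sc t)" "lin2 (sc t) < v2" using lin2_int s by auto
  show "FF ` (UNIV \<times> {t}) = UNIV \<times> {lin2 (sc t)}"
  proof
    show "FF ` (UNIV \<times> {t}) \<subseteq> UNIV \<times> {lin2 (sc t)}" unfolding FF_def by auto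
    show "UNIV \<times> {lin2 (sc t)} \<subseteq> FF ` (UNIV \<times> {t})"
    proof
      fix z :: "real \<times> real" assume z: "z \<in> UNIV \<times> {lin2 (sc t)}"
      then have zS: "z \<in> S2" using in2 l by auto
      have "snd z = lin2 (sc t)" using z by auto
      then have "snd (GG z) = t" unfolding GG_def by (simp add: arith)
      then have "GG z \<in> UNIV \<times> {t}" by (cases "GG z") auto
      moreover have "z = FF (GG z)" using FG[OF zS] by simp
      ultimately show "z \<in> FF ` (UNIV \<times> {t})" by (rule rev_image_eqI)
    qed
  qed
qed

end


lemma strip_bd_eq:
  assumes "strip_lo S = u" "strip_hi S = v"
  shows "strip_bd S = {p\<in>S. snd p = u \<or> snd p = v}"
  using assms unfolding strip_bd_def bd_minus_def bd_plus_def by (auto simp: mem_Times_iff)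

theorem mainTheorem2:
  fixes S1 S2 :: "(real \<times> real) set" and h h' :: "real \<times> real \<Rightarrow> real \<times> real"
  assumes "is_strip S1" and "is_strip S2"
    and "homeomorphism (strip_bd S1) (strip_bd S2) h h'"
    and "monotone_bd (strip_bd S1) h"
  shows "\<exists>f g. homeomorphism S1 S2 f g \<and> foliated S1 S2 f \<and> (\<forall>p\<in>strip_bd S1. f p = h p)"
proof -
  obtain u1 v1 where s1: "u1 < v1" "strip_lo S1 = u1" "strip_hi S1 = v1" "UNIV \<times> {u1<..<v1} \<subseteq> S1"
    "S1 \<subseteq> UNIV \<times> {u1..v1}" "open {a. (a, u1) \<in> S1}" "open {a. (a, v1) \<in> S1}"
    using strip_struct[OF assms(1)] by blast
  obtain u2 v2 where s2: "u2 < v2" "strip_lo S2 = u2" "strip_hi S2 = v2" "UNIV \<times> {u2<..<v2} \<subseteq> S2"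
    "S2 \<subseteq> UNIV \<times> {u2..v2}" "open {a. (a, u2) \<in> S2}" "open {a. (a, v2) \<in> S2}"
    using strip_struct[OF assms(2)] by blast
  have bd1: "strip_bd S1 = {p\<in>S1. snd p = u1 \<or> snd p = v1}" using strip_bd_eq s1 by blast
  have bd2: "strip_bd S2 = {p\<in>S2. snd p = u2 \<or> snd p = v2}" using strip_bd_eq s2 by blast
  interpret I: stripsetup S1 S2 h h' u1 v1 u2 v2
    using s1 s2 assms(3,4) unfolding bd1 bd2 by unfold_locales auto
  have fol: "foliated S1 S2 I.FF"
    unfolding foliated_def
  proof
    fix L assume "L \<in> canonical_leaves S1"
    then consider t where "L = UNIV \<times> {t}" "u1 < t" "t < v1" | "L \<in> components (strip_bd S1)"
      unfolding canonical_leaves_def using s1 by blast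
    then show "I.FF ` L \<in> canonical_leaves S2"
    proof cases
      case 1
      then have "I.FF ` L = UNIV \<times> {I.lin2 (I.sc t)}" "u2 < I.lin2 (I.sc t)" "I.lin2 (I.sc t) < v2"
        using I.FF_line by auto
      then show ?thesis unfolding canonical_leaves_def using s2 by blast
    next
      case 2
      then have "L \<subseteq> strip_bd S1" by (rule in_components_subset)
      then have "I.FF ` L = h ` L" using I.FF_h bd1 by (auto intro!: image_cong)
      moreover have "h ` L \<in> components (strip_bd S2)" by (rule homeo_components[OF assms(3) 2])
      ultimately show ?thesis unfolding canonical_leaves_def by simp
    qed
  qed
  show ?thesis
    using I.homeo fol I.FF_h bd1 by blast
qed


end
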